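(* Let $\pi_1^E$ be a collision-free path in $G=(L,\bar{E}_{\text{CF}},c)$ from $p_s$ to $p_g$, with cost $c(\pi_1^E)$, given as input to the smoothing algorithm DagSmooth, and let $\pi_2^E$ be the path returned by DagSmooth, with cost $c(\pi_2^E)$. Then $c(\pi_2^E)\leq c(\pi_1^E)$. Moreover, if $n=0$, DagSmooth runs in time quadratic in the number of vertices along $\pi_1^E$.
   Context: Setting: $L\subseteq\mathcal{X}$ is a lattice of configurations; for any configurations $i,j$ there is an optimal (cost-minimizing, kinodynamically feasible, obstacle-free) motion from $i$ to $j$ with cost $c\geq 0$; these optimal motions between lattice vertices are pre-computed and can be retrieved in constant time. $G=(L,\bar{E}_{\text{CF}},c)$ is a weighted directed graph whose edges $(i,j)$ correspond to collision-free optimal motions from $i$ to $j$ (with respect to obstacles $\mathcal{X}_{\text{obs}}$) with weight equal to their cost. A path $\pi_1^E=\{(i_r,i_{r+1}):r=1,\dots,m-1\}$ in $G$ with $i_1=p_s$, $i_m=p_g$ has cost the sum of edge costs; $C_\pi$ is the set of all configurations along the motions from $i_r$ to $i_{r+1}$. A function $\Psi:\mathbb{R}\to\mathbb{R}$ gives the cost $\Psi(c(p))$ of traversing a motion $p$ backwards. DagSmooth$(\pi_1^E,C_\pi,\mathcal{X}_{\text{obs}},c,n,\Psi)$, with $n\in\mathbb{N}_{\geq0}$: sample $n$ random configurations from $C_\pi$; let $V$ consist of $i_1,\dots,i_m$ together with these samples, listed as $i_1,\dots,i_{m+n}$ in the order they appear along $C_\pi$. Set $\text{dist}(i)=\infty$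 for all $i\in V$, $\text{dist}(i_1)=0$. For $u=1,\dots,m+n-1$ and $v=u+1,\dots,m+n$: let $p_1$ be the optimal motion from $i_u$ to $i_v$ and $p_2$ the optimal motion from $i_v$ to $i_u$ (to be traversed backwards); let $\underline{c},\underline{p}$ be the smaller of $c(p_1),\Psi(c(p_2))$ and the corresponding motion, and $\overline{c},\overline{p}$ the larger and its motion. If $\text{dist}(i_u)+\underline{c}\leq\text{dist}(i_v)$: if $\underline{p}$ is collision-free, set $\text{dist}(i_v)=\text{dist}(i_u)+\underline{c}$ and $\text{Pred}(i_v)=i_u$; otherwise, if $\text{dist}(i_u)+\overline{c}\leq\text{dist}(i_v)$ and $\overline{p}$ is collision-free, set $\text{dist}(i_v)=\text{dist}(i_u)+\overline{c}$ and $\text{Pred}(i_v)=i_u$. Return the path obtained by following the chain of predecessors backwards from the goal $p_g$; its cost is the sum of the chosen costs along it. Running time counts each motion retrieval, cost evaluation and collision check as one operation. *)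

theory Defs
  imports Complex_Main "HOL-Library.Extended_Real"
begin

text \<open>Configurations have type 'x, motions type 'm.
  mot i j is the (pre-computed) optimal motion from i to j; traj p t, t in [0,1],
  is the configuration at parameter t along motion p; c is the cost of a motion;
  Psi gives the cost of traversing a motion backwards.\<close>

definition coll_free :: "('m \<Rightarrow> real \<Rightarrow> 'x) \<Rightarrow> 'x set \<Rightarrow> 'm \<Rightarrow> bool" where
  "coll_free traj Xobs p \<longleftrightarrow> (\<forall>t\<in>{0..1}. traj p t \<notin> Xobs)"

definition is_cf_path ::
  "'x set \<Rightarrow> ('x \<Rightarrow> 'x \<Rightarrow> 'm) \<Rightarrow> ('m \<Rightarrow> bool) \<Rightarrow> 'x \<Rightarrow> 'x \<Rightarrow> 'x list \<Rightarrow> bool" where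
  "is_cf_path L mot cf ps pg pv \<longleftrightarrow>
     pv \<noteq> [] \<and> hd pv = ps \<and> last pv = pg \<and> set pv \<subseteq> L \<and>
     (\<forall>r. Suc r < length pv \<longrightarrow> cf (mot (pv ! r) (pv ! Suc r)))"

definition path_cost :: "('x \<Rightarrow> 'x \<Rightarrow> 'm) \<Rightarrow> ('m \<Rightarrow> real) \<Rightarrow> 'x list \<Rightarrow> real" where
  "path_cost mot c pv = (\<Sum>r<length pv - 1. c (mot (pv ! r) (pv ! Suc r)))"

text \<open>V is the list of the path vertices together with n configurations sampled from
  C_pi, listed in the order in which they appear along C_pi: idx r is the position of
  i_(r+1) in V, and a sample between positions idx r and idx (r+1) lies on the motion
  from i_(r+1) to i_(r+2) at parameter ts k, parameters nondecreasing.\<close>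
definition dag_vertices ::
  "('m \<Rightarrow> real \<Rightarrow> 'x) \<Rightarrow> ('x \<Rightarrow> 'x \<Rightarrow> 'm) \<Rightarrow> 'x list \<Rightarrow> nat \<Rightarrow> 'x list \<Rightarrow> bool" where
  "dag_vertices traj mot pv n V \<longleftrightarrow>
     length V = length pv + n \<and>
     (\<exists>(idx :: nat \<Rightarrow> nat) (ts :: nat \<Rightarrow> real).
        strict_mono_on {..<length pv} idx \<and> idx 0 = 0 \<and> idx (length pv - 1) = length V - 1 \<and>
        (\<forall>r < length pv. V ! idx r = pv ! r) \<and>
        (\<forall>r. Suc r < length pv \<longrightarrow>
            (\<forall>k. idx r < k \<and> k < idx (Suc r) \<longrightarrow>
                 ts k \<in> {0..1} \<and> V ! k = traj (mot (pv ! r) (pv ! Suc r)) (ts k)) \<and>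
            mono_on {idx r<..<idx (Suc r)} ts))"

text \<open>Algorithm state: dist, Pred, chosen cost of the edge into each vertex, operation count.
  Vertices are referred to by their position in V.\<close>
type_synonym dag_state = "(nat \<Rightarrow> ereal) \<times> (nat \<Rightarrow> nat) \<times> (nat \<Rightarrow> real) \<times> nat"

text \<open>One iteration (u,v).  Operations counted: 2 motion retrievals, 2 cost evaluations,
  and each collision check actually performed.  Ties c(p1) = Psi(c(p2)) choose p1 as the
  smaller one.\<close>
definition relax_step ::
  "('x \<Rightarrow> 'x \<Rightarrow> 'm) \<Rightarrow> ('m \<Rightarrow> real) \<Rightarrow> ('m \<Rightarrow> bool) \<Rightarrow> (real \<Rightarrow> real) \<Rightarrow> 'x list \<Rightarrow>
   nat \<Rightarrow> nat \<Rightarrow> dag_state \<Rightarrow> dag_state" where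
  "relax_step mot c cf Psi V u v st = (case st of (dst, pred, cst, ops) \<Rightarrow>
     let p1 = mot (V ! u) (V ! v); p2 = mot (V ! v) (V ! u);
         c1 = c p1; c2 = Psi (c p2);
         lc = (if c1 \<le> c2 then c1 else c2); lp = (if c1 \<le> c2 then p1 else p2);
         oc = (if c1 \<le> c2 then c2 else c1); op = (if c1 \<le> c2 then p2 else p1);
         ops' = ops + 4
     in if dst u + ereal lc \<le> dst v then
          (if cf lp then (dst(v := dst u + ereal lc), pred(v := u), cst(v := lc), ops' + 1)
           else if dst u + ereal oc \<le> dst v then
             (if cf op then (dst(v := dst u + ereal oc), pred(v := u), cst(v := oc), ops' + 2)
              else (dst, pred, cst, ops' + 2))
           else (dst, pred, cst, ops' + 1))
        else (dst, pred, cst, ops'))"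

definition dag_init :: dag_state where
  "dag_init = ((\<lambda>_. \<infinity>)(0 := 0), id, (\<lambda>_. 0), 0)"

definition dag_loop ::
  "('x \<Rightarrow> 'x \<Rightarrow> 'm) \<Rightarrow> ('m \<Rightarrow> real) \<Rightarrow> ('m \<Rightarrow> bool) \<Rightarrow> (real \<Rightarrow> real) \<Rightarrow> 'x list \<Rightarrow> dag_state" where
  "dag_loop mot c cf Psi V =
     foldl (\<lambda>st (u, v). relax_step mot c cf Psi V u v st) dag_init
       [(u, v). u \<leftarrow> [0..<length V - 1], v \<leftarrow> [Suc u..<length V]]"

text \<open>Follow the chain of predecessors backwards (Pred v < v for every updated v).\<close>
fun back_chain :: "(nat \<Rightarrow> nat) \<Rightarrow> nat \<Rightarrow> nat list" where
  "back_chain pr v = (if pr v < v then back_chain pr (pr v) @ [v] else [v])"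

definition dagsmooth ::
  "('x \<Rightarrow> 'x \<Rightarrow> 'm) \<Rightarrow> ('m \<Rightarrow> real) \<Rightarrow> ('m \<Rightarrow> bool) \<Rightarrow> (real \<Rightarrow> real) \<Rightarrow> 'x list \<Rightarrow>
   'x list \<times> real \<times> nat" where
  "dagsmooth mot c cf Psi V = (case dag_loop mot c cf Psi V of (dst, pred, cst, ops) \<Rightarrow>
     let is = back_chain pred (length V - 1)
     in (map (\<lambda>i. V ! i) is, sum_list (map cst (tl is)), ops))"

end

theory Submission
  imports Defs
begin

lemma relax_shape:
  assumes "relax_step mot c cf Psi V u v (dst, pred, cst, ops) = (dst', pred', cst', ops')"
  shows "((dst', pred', cst') = (dst, pred, cst) \<or>
          (\<exists>x. dst' = dst(v := dst u + ereal x) \<and> pred' = pred(v := u) \<and> cst' = cst(v := x)))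
        \<and> ops' \<le> ops + 6
        \<and> (cf (mot (V ! u) (V ! v)) \<longrightarrow> dst' v \<le> dst u + ereal (c (mot (V ! u) (V ! v))))"
proof -
  have m: "(a::ereal) + ereal x \<le> a + ereal y" if "x \<le> y" for a x y
    using that by (intro add_left_mono) simp
  show ?thesis
  using assms unfolding relax_step_def Let_def
  apply (auto split: if_splits intro: m)
  apply (rule m; simp)
  subgoal premises P
    using P(5) m[of "Psi (c (mot (V ! v) (V ! u)))" "c (mot (V ! u) (V ! v))" "dst' u"] P(1)
    by (simp add: not_le)
  done
qed

definition inv_st :: "nat set \<Rightarrow> dag_state \<Rightarrow> bool" where
 "inv_st F st = (case st of (dst,pred,cst,ops) \<Rightarrow> dst 0 = 0 \<and> pred 0 = 0 \<and> (\<forall>v. dst v \<noteq> -\<infinity>)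
    \<and> (\<forall>v. v = 0 \<or> pred v < v \<or> dst v = \<infinity>)
    \<and> (\<forall>v. pred v < v \<longrightarrow> dst v = dst (pred v) + ereal (cst v) \<and> pred v \<in> F))"

lemma inv_step:
  assumes "inv_st F st" "u < v" "\<forall>f\<in>F. f \<le> u"
  shows "inv_st (insert u F) (relax_step mot c cf Psi V u v st)"
proof -
  obtain dst pred cst ops where st: "st = (dst, pred, cst, ops)" by (cases st) auto
  obtain dst' pred' cst' ops' where r: "relax_step mot c cf Psi V u v st = (dst', pred', cst', ops')"
    by (cases "relax_step mot c cf Psi V u v st") auto
  have I: "dst 0 = 0" "pred 0 = 0" "\<forall>v. dst v \<noteq> -\<infinity>" "\<forall>v. v = 0 \<or> pred v < v \<or> dst v = \<infinity>"
    "\<forall>v. pred v < v \<longrightarrow> dst v = dst (pred v) + ereal (cst v) \<and> pred v \<in> F"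
    using assms(1) unfolding st inv_st_def by auto
  from relax_shape[OF r[unfolded st]]
  have "(dst', pred', cst') = (dst, pred, cst) \<or>
          (\<exists>x. dst' = dst(v := dst u + ereal x) \<and> pred' = pred(v := u) \<and> cst' = cst(v := x))" by blast
  then show ?thesis
  proof
    assume "(dst', pred', cst') = (dst, pred, cst)"
    then show ?thesis using I r unfolding inv_st_def by auto
  next
    assume "\<exists>x. dst' = dst(v := dst u + ereal x) \<and> pred' = pred(v := u) \<and> cst' = cst(v := x)"
    then obtain x where x: "dst' = dst(v := dst u + ereal x)" "pred' = pred(v := u)" "cst' = cst(v := x)" by blast
    have v0: "v \<noteq> 0" using assms(2) by simp
    have A: "dst' 0 = 0" "pred' 0 = 0" using I v0 x by auto
    have B: "\<forall>w. dst' w \<noteq> -\<infinity>" using I(3) x by auto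
    have C: "\<forall>w. w = 0 \<or> pred' w < w \<or> dst' w = \<infinity>" using I(4) x assms(2) by auto
    have D: "pred' w < w \<longrightarrow> dst' w = dst' (pred' w) + ereal (cst' w) \<and> pred' w \<in> insert u F" for w
    proof (cases "w = v")
      case True then show ?thesis using x assms(2) by auto
    next
      case False
      show ?thesis
      proof
        assume "pred' w < w"
        then have pw: "pred w < w" using False x by simp
        then have "pred w \<in> F" using I(5) by blast
        then have "pred w \<noteq> v" using assms(2,3) by fastforce
        then show "dst' w = dst' (pred' w) + ereal (cst' w) \<and> pred' w \<in> insert u F"
          using I(5) pw False x by auto
      qed
    qed
    show ?thesis using A B C D r unfolding inv_st_def by auto
  qed
qed

lemma inv_init: "inv_st {} dag_init"
  unfolding inv_st_def dag_init_def by auto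

lemma inv_loop:
  assumes "\<forall>(a,b)\<in>set xs. a < b" "sorted_wrt (\<lambda>x y. fst x \<le> fst y) xs"
  shows "inv_st (fst ` set xs) (foldl (\<lambda>st (u, v). relax_step mot c cf Psi V u v st) dag_init xs)"
  using assms
proof (induction xs rule: rev_induct)
  case Nil then show ?case using inv_init by simp
next
  case (snoc x xs)
  obtain a b where x: "x = (a, b)" by (cases x) auto
  have IH: "inv_st (fst ` set xs) (foldl (\<lambda>st (u, v). relax_step mot c cf Psi V u v st) dag_init xs)"
    using snoc by (auto simp: sorted_wrt_append)
  have "\<forall>f\<in>fst ` set xs. f \<le> a" using snoc.prems(2) x by (auto simp: sorted_wrt_append)
  moreover have "a < b" using snoc.prems(1) x by auto
  ultimately show ?case using inv_step[OF IH] x by simp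
qed

lemma loop_dec:
  "fst (foldl (\<lambda>st (u, v). relax_step mot c cf Psi V u v st) st xs) w \<le> fst st w"
proof (induction xs arbitrary: st)
  case Nil then show ?case by simp
next
  case (Cons x xs)
  obtain a b where x: "x = (a, b)" by (cases x) auto
  obtain dst pred cst ops where st: "st = (dst, pred, cst, ops)" by (cases st) auto
  obtain dst' pred' cst' ops' where r: "relax_step mot c cf Psi V a b st = (dst', pred', cst', ops')"
    by (cases "relax_step mot c cf Psi V a b st") auto
  have "dst' w \<le> dst w"
  proof -
    have "ops' \<le> ops + 6" using relax_shape[OF r[unfolded st]] by blast
    show ?thesis using r unfolding st relax_step_def Let_def
      by (auto split: if_splits)
  qed
  then show ?case using Cons.IH[of "(dst', pred', cst', ops')"] r x st
    by (simp del: foldl_Cons) (auto intro: order.trans)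
qed

lemma loop_unch:
  "\<forall>(a,b)\<in>set xs. b \<noteq> w \<Longrightarrow>
   fst (foldl (\<lambda>st (u, v). relax_step mot c cf Psi V u v st) st xs) w = fst st w"
proof (induction xs arbitrary: st)
  case Nil then show ?case by simp
next
  case (Cons x xs)
  obtain a b where x: "x = (a, b)" by (cases x) auto
  obtain dst pred cst ops where st: "st = (dst, pred, cst, ops)" by (cases st) auto
  obtain dst' pred' cst' ops' where r: "relax_step mot c cf Psi V a b st = (dst', pred', cst', ops')"
    by (cases "relax_step mot c cf Psi V a b st") auto
  have "b \<noteq> w" using Cons.prems x by auto
  then have "dst' w = dst w" using relax_shape[OF r[unfolded st]] by auto
  then show ?case using Cons.IH[of "(dst', pred', cst', ops')"] Cons.prems r x st
    by simp
qed

lemma loop_ops: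
  "snd (snd (snd (foldl (\<lambda>st (u, v). relax_step mot c cf Psi V u v st) st xs)))
     \<le> snd (snd (snd st)) + 6 * length xs"
proof (induction xs arbitrary: st)
  case Nil then show ?case by simp
next
  case (Cons x xs)
  obtain a b where x: "x = (a, b)" by (cases x) auto
  obtain dst pred cst ops where st: "st = (dst, pred, cst, ops)" by (cases st) auto
  obtain dst' pred' cst' ops' where r: "relax_step mot c cf Psi V a b st = (dst', pred', cst', ops')"
    by (cases "relax_step mot c cf Psi V a b st") auto
  have "ops' \<le> ops + 6" using relax_shape[OF r[unfolded st]] by auto
  then show ?case using Cons.IH[of "(dst', pred', cst', ops')"] r x st
    by simp
qed

declare back_chain.simps[simp del]

lemma back_chain_ne: "back_chain pr v \<noteq> []"
  by (induction pr v rule: back_chain.induct) (subst back_chain.simps, auto)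

lemma chain:
  assumes "inv_st F (dst, pred, cst, ops)"
  shows "dst v \<noteq> \<infinity> \<Longrightarrow> ereal (sum_list (map cst (tl (back_chain pred v)))) = dst v"
proof (induction v rule: less_induct)
  case (less v)
  have I: "dst 0 = 0" "pred 0 = 0" "\<forall>v. dst v \<noteq> -\<infinity>" "\<forall>v. v = 0 \<or> pred v < v \<or> dst v = \<infinity>"
    "\<forall>v. pred v < v \<longrightarrow> dst v = dst (pred v) + ereal (cst v) \<and> pred v \<in> F"
    using assms(1) unfolding inv_st_def by auto
  show ?case
  proof (cases "pred v < v")
    case True
    have e: "back_chain pred v = back_chain pred (pred v) @ [v]" using True by (subst back_chain.simps) simp
    have d: "dst v = dst (pred v) + ereal (cst v)" using I(5) True by blast
    then have "dst (pred v) \<noteq> \<infinity>" using less.prems by auto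
    then have "ereal (sum_list (map cst (tl (back_chain pred (pred v))))) = dst (pred v)"
      using less.IH True by blast
    moreover have "tl (back_chain pred v) = tl (back_chain pred (pred v)) @ [v]"
      using e back_chain_ne[of pred "pred v"] by (cases "back_chain pred (pred v)") auto
    ultimately show ?thesis using d by (simp flip: plus_ereal.simps(1))
  next
    case False
    have e: "back_chain pred v = [v]" using False by (subst back_chain.simps) simp
    have "v = 0" using I(4) False less.prems by blast
    then show ?thesis using e I(1) by (simp add: zero_ereal_def)
  qed
qed

lemma lst_sorted:
  "sorted_wrt (\<lambda>x y. fst x \<le> fst y) (concat (map (\<lambda>u. map (Pair u) [Suc u..<n]) [0..<m]))"
  by (induction m) (auto simp: sorted_wrt_append sorted_wrt_map)

lemma lst_length:
  "length (concat (map (\<lambda>u. map (Pair u) [Suc u..<n]) [0..<m])) \<le> m * n"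
  by (induction m) auto

lemma part2:
  assumes "dag_vertices traj mot pv 0 V"
  shows "snd (snd (dagsmooth mot c cf Psi V)) \<le> 6 * (length pv)\<^sup>2"
proof -
  have len: "length V = length pv" using assms unfolding dag_vertices_def by simp
  obtain dst pred cst ops where d: "dag_loop mot c cf Psi V = (dst, pred, cst, ops)"
    by (cases "dag_loop mot c cf Psi V") auto
  have "ops \<le> 0 + 6 * length [(u, v). u \<leftarrow> [0..<length V - 1], v \<leftarrow> [Suc u..<length V]]"
    using loop_ops[of mot c cf Psi V dag_init "[(u, v). u \<leftarrow> [0..<length V - 1], v \<leftarrow> [Suc u..<length V]]"] d
    unfolding dag_loop_def by (simp add: dag_init_def)
  also have "\<dots> \<le> 6 * ((length V - 1) * length V)"
    using lst_length by simp
  also have "\<dots> \<le> 6 * (length pv)\<^sup>2" using len by (simp add: power2_eq_square)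
  finally show ?thesis using d unfolding dagsmooth_def by (simp add: Let_def)
qed

lemma part1:
  assumes P: "is_cf_path L mot cf ps pg pv"
    and D: "dag_vertices traj mot pv n V"
  shows "fst (snd (dagsmooth mot c cf Psi V)) \<le> path_cost mot c pv"
proof -
  define Ls where "Ls = [(u, v). u \<leftarrow> [0..<length V - 1], v \<leftarrow> [Suc u..<length V]]"
  define F where "F = (\<lambda>st (u, v). relax_step mot c cf Psi V u v st)"
  have loop: "dag_loop mot c cf Psi V = foldl F dag_init Ls" unfolding dag_loop_def F_def Ls_def ..
  obtain dst pred cst ops where d: "dag_loop mot c cf Psi V = (dst, pred, cst, ops)"
    by (cases "dag_loop mot c cf Psi V") auto
  have lt: "\<forall>(a,b)\<in>set Ls. a < b" unfolding Ls_def by auto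
  have so: "sorted_wrt (\<lambda>x y. fst x \<le> fst y) Ls" unfolding Ls_def by (rule lst_sorted)
  have inv: "inv_st (fst ` set Ls) (dst, pred, cst, ops)"
    using inv_loop[OF lt so, of mot c cf Psi V] d loop unfolding F_def by simp
  have pne: "pv \<noteq> []" and cfe: "\<forall>r. Suc r < length pv \<longrightarrow> cf (mot (pv ! r) (pv ! Suc r))"
    using P unfolding is_cf_path_def by auto
  obtain idx :: "nat \<Rightarrow> nat" where sm: "strict_mono_on {..<length pv} idx" and i0: "idx 0 = 0"
    and il: "idx (length pv - 1) = length V - 1" and iv: "\<forall>r < length pv. V ! idx r = pv ! r"
    using D unfolding dag_vertices_def by blast
  have lV: "length V = length pv + n" using D unfolding dag_vertices_def by simp
  have ile: "idx r \<le> length V - 1" if "r < length pv" for r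
  proof (cases "r = length pv - 1")
    case True then show ?thesis using il by simp
  next
    case False
    then have "idx r < idx (length pv - 1)" using sm that
      by (intro strict_mono_onD[OF sm]) auto
    then show ?thesis using il by simp
  qed
  have main: "r < length pv \<Longrightarrow> dst (idx r) \<le> ereal (\<Sum>k<r. c (mot (pv ! k) (pv ! Suc k)))" for r
  proof (induction r)
    case 0
    have "dst 0 = 0" using inv unfolding inv_st_def by simp
    then show ?case using i0 by (simp add: zero_ereal_def)
  next
    case (Suc r)
    define a where "a = idx r"
    define b where "b = idx (Suc r)"
    have ab: "a < b" unfolding a_def b_def using Suc.prems by (intro strict_mono_onD[OF sm]) auto
    have "length pv > 0" using pne by simp
    then have bV: "b < length V" using ile[OF Suc.prems] lV unfolding b_def by linarith
    have "(a, b) \<in> set Ls" unfolding Ls_def using ab bV by (auto intro!: bexI[of _ a])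
    then obtain A B where LsAB: "Ls = A @ (a, b) # B" by (meson in_set_conv_decomp)
    have Bgt: "\<forall>(x,y)\<in>set B. y \<noteq> a"
    proof -
      have "\<forall>y\<in>set B. a \<le> fst y" using so unfolding LsAB by (auto simp: sorted_wrt_append)
      moreover have "\<forall>(x,y)\<in>set B. x < y" using lt unfolding LsAB by auto
      ultimately show ?thesis by fastforce
    qed
    define S where "S = foldl F dag_init A"
    have fin: "foldl F dag_init Ls = foldl F (F S (a, b)) B" unfolding LsAB S_def by simp
    have dsta: "dst a = fst S a"
    proof -
      have "dst a = fst (foldl F S ((a, b) # B)) a" using fin d loop by simp
      also have "\<dots> = fst S a" unfolding F_def
        by (rule loop_unch) (use Bgt ab in auto)
      finally show ?thesis .
    qed
    have dstb: "dst b \<le> fst (F S (a, b)) b"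
      using loop_dec[of mot c cf Psi V "F S (a, b)" B b] fin d loop unfolding F_def by simp
    obtain dS pS cS oS where Se: "S = (dS, pS, cS, oS)" by (cases S) auto
    obtain d' p' c' o' where r: "relax_step mot c cf Psi V a b S = (d', p', c', o')"
      by (cases "relax_step mot c cf Psi V a b S") auto
    have Va: "V ! a = pv ! r" and Vb: "V ! b = pv ! Suc r" using iv Suc.prems a_def b_def by auto
    have "cf (mot (V ! a) (V ! b))" using cfe Suc.prems Va Vb by simp
    then have "d' b \<le> dS a + ereal (c (mot (pv ! r) (pv ! Suc r)))"
      using relax_shape[OF r[unfolded Se]] Va Vb by simp
    then have "dst b \<le> dst a + ereal (c (mot (pv ! r) (pv ! Suc r)))"
      using dstb dsta r Se unfolding F_def by simp
    also have "\<dots> \<le> ereal (\<Sum>k<r. c (mot (pv ! k) (pv ! Suc k))) + ereal (c (mot (pv ! r) (pv ! Suc r)))"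
      using Suc.IH Suc.prems unfolding a_def by (intro add_right_mono) auto
    finally show ?case unfolding b_def by simp
  qed
  have last: "dst (length V - 1) \<le> ereal (path_cost mot c pv)"
    using main[of "length pv - 1"] pne il unfolding path_cost_def by simp
  then have "dst (length V - 1) \<noteq> \<infinity>" by auto
  then have "ereal (sum_list (map cst (tl (back_chain pred (length V - 1))))) = dst (length V - 1)"
    by (rule chain[OF inv])
  with last have "sum_list (map cst (tl (back_chain pred (length V - 1)))) \<le> path_cost mot c pv"
    by (metis ereal_less_eq(3))
  then show ?thesis using d unfolding dagsmooth_def by (simp add: Let_def)
qed


theorem theorem2:
  fixes L Xobs :: "'x set" and mot :: "'x \<Rightarrow> 'x \<Rightarrow> 'm" and traj :: "'m \<Rightarrow> real \<Rightarrow> 'x"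
    and c :: "'m \<Rightarrow> real" and Psi :: "real \<Rightarrow> real" and pv V :: "'x list"
    and ps pg :: 'x and n :: nat
  assumes "\<forall>i j. traj (mot i j) 0 = i \<and> traj (mot i j) 1 = j"
    and "\<forall>p. c p \<ge> 0"
    and "is_cf_path L mot (coll_free traj Xobs) ps pg pv"
    and "dag_vertices traj mot pv n V"
  shows "fst (snd (dagsmooth mot c (coll_free traj Xobs) Psi V)) \<le> path_cost mot c pv \<and>
    (\<exists>C::nat. \<forall>(L' :: 'x set) (Xobs' :: 'x set) (mot' :: 'x \<Rightarrow> 'x \<Rightarrow> 'm) (traj' :: 'm \<Rightarrow> real \<Rightarrow> 'x)
        (c' :: 'm \<Rightarrow> real) (Psi' :: real \<Rightarrow> real) (pv' :: 'x list) (V' :: 'x list) (ps' :: 'x) (pg' :: 'x).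
       (\<forall>i j. traj' (mot' i j) 0 = i \<and> traj' (mot' i j) 1 = j) \<and> (\<forall>p. c' p \<ge> 0) \<and>
       is_cf_path L' mot' (coll_free traj' Xobs') ps' pg' pv' \<and>
       dag_vertices traj' mot' pv' 0 V' \<longrightarrow>
       snd (snd (dagsmooth mot' c' (coll_free traj' Xobs') Psi' V')) \<le> C * (length pv')\<^sup>2)"
    apply (rule conjI)
   apply (rule part1[OF assms(3) assms(4)])
  apply (rule exI[of _ 6])
  apply (intro allI impI)
  apply (elim conjE)
  apply (rule part2)
  apply assumption
  done

end
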